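(* Let $H=(V_1,\dots,V_d,E)$ be a finite $d$-partite hypergraph with $E\neq\emptyset$, and let $W_j\subseteq V_j$ for $j=1,\dots,d$. Then for every $i=1,\dots,d$, \[ disc_H(W_1,\dots,W_d)\leq disc_{B_i}\big(W_i,E_i(W_1,\dots,W_d)\big)+\frac{|W_i|}{|V_i|}\,disc_{H_i}(W_1,\dots,W_{i-1},W_{i+1},\dots,W_d). \]
   Context: A $d$-partite hypergraph $H=(V_1,\dots,V_d,E)$ has vertex set $V_1\sqcup\dots\sqcup V_d$ and edges $E\subseteq\prod_{i=1}^dV_i$ (each edge is a $d$-set with exactly one vertex in each $V_i$). For $W_j\subseteq V_j$, $E(W_1,\dots,W_d)=E\cap\prod_j W_j$ and $disc_H(W_1,\dots,W_d)=\left|\frac{|E(W_1,\dots,W_d)|}{|E|}-\prod_{j=1}^d\frac{|W_j|}{|V_j|}\right|$. For each $i$, $E_i=\{e\setminus\{v\}: e\in E,\ v\in e\cap V_i\}$ (walls of cotype $i$), $H_i=(V_1,\dots,V_{i-1},V_{i+1},\dots,V_d,E_i)$ is the induced $(d-1)$-partite hypergraph, $E_i(W_1,\dots,W_d)=E_i\cap\prod_{j\ne i}W_j$, and $disc_{H_i}(W_1,\dots,W_{i-1},W_{i+1},\dots,W_d)=\left|\frac{|E_i(W_1,\dots,W_d)|}{|E_i|}-\prod_{j\ne i}\frac{|W_j|}{|V_j|}\right|$. $B_i$ is the bipartite graph with vertex sides $V_i$ and $E_i$, where $v\in V_i$ and $Y\in E_i$ are adjacent iff $\{v\}\cup Y\in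 E$; its edge set is $E_{B_i}$. For a bipartite graph with sides $V,V'$ and edge set $E'$, and $S\subseteq V$, $T\subseteq V'$, $disc(S,T)=\left|\frac{|E'(S,T)|}{|E'|}-\frac{|S|}{|V|}\frac{|T|}{|V'|}\right|$. *)

theory Defs
  imports Complex_Main "HOL-Library.FuncSet"
begin

text \<open>A partite hypergraph on index set I: vertex classes V j (j in I), edges are
  tuples e in PiE I V (exactly one vertex in each class).\<close>

definition hdisc :: "nat set \<Rightarrow> (nat \<Rightarrow> 'a set) \<Rightarrow> (nat \<Rightarrow> 'a) set \<Rightarrow> (nat \<Rightarrow> 'a set) \<Rightarrow> real" where
  "hdisc I V E W = \<bar>real (card (E \<inter> PiE I W)) / real (card E)
                     - (\<Prod>j\<in>I. real (card (W j)) / real (card (V j)))\<bar>"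

definition walls :: "nat \<Rightarrow> (nat \<Rightarrow> 'a) set \<Rightarrow> nat \<Rightarrow> (nat \<Rightarrow> 'a) set" where
  "walls d E i = (\<lambda>e. restrict e ({1..d} - {i})) ` E"

definition bip_edges :: "nat \<Rightarrow> (nat \<Rightarrow> 'a set) \<Rightarrow> (nat \<Rightarrow> 'a) set \<Rightarrow> nat \<Rightarrow> ('a \<times> (nat \<Rightarrow> 'a)) set" where
  "bip_edges d V E i = {(v, Y). v \<in> V i \<and> Y \<in> walls d E i \<and> Y(i := v) \<in> E}"

definition bdisc :: "'a set \<Rightarrow> 'b set \<Rightarrow> ('a \<times> 'b) set \<Rightarrow> 'a set \<Rightarrow> 'b set \<Rightarrow> real" where
  "bdisc A B F S T = \<bar>real (card (F \<inter> S \<times> T)) / real (card F)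
                       - real (card S) / real (card A) * (real (card T) / real (card B))\<bar>"

end

theory Submission
  imports Defs
begin

lemma restr_upd:
  assumes "e \<in> PiE I V" "i \<in> I"
  shows "(restrict e (I - {i}))(i := e i) = e"
proof
  fix x show "((restrict e (I - {i}))(i := e i)) x = e x"
    using assms by (cases "x = i") (auto simp: PiE_def extensional_def)
qed

theorem lemma3p5:
  fixes d :: nat and V W :: "nat \<Rightarrow> 'a set" and E :: "(nat \<Rightarrow> 'a) set" and i :: nat
  assumes "\<And>j. j \<in> {1..d} \<Longrightarrow> finite (V j)"
    and "E \<subseteq> PiE {1..d} V"
    and "E \<noteq> {}"
    and "\<And>j. j \<in> {1..d} \<Longrightarrow> W j \<subseteq> V j"
    and "i \<in> {1..d}"
  shows "hdisc {1..d} V E W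
    \<le> bdisc (V i) (walls d E i) (bip_edges d V E i) (W i) (walls d E i \<inter> PiE ({1..d} - {i}) W)
       + real (card (W i)) / real (card (V i)) * hdisc ({1..d} - {i}) V (walls d E i) W"
proof -
  define I where "I = {1..d::nat}"
  define f where "f = (\<lambda>e::nat\<Rightarrow>'a. (e i, restrict e (I - {i})))"
  define T where "T = walls d E i \<inter> PiE (I - {i}) W"
  have iI: "i \<in> I" using assms(5) I_def by simp
  have EP: "E \<subseteq> PiE I V" using assms(2) I_def by simp
  have inj: "inj_on f E"
  proof (rule inj_onI)
    fix x y assume xy: "x \<in> E" "y \<in> E" "f x = f y"
    hence "x i = y i" "restrict x (I - {i}) = restrict y (I - {i})" by (auto simp: f_def)
    thus "x = y" using restr_upd[of x I V i] restr_upd[of y I V i] xy EP iI by auto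
  qed
  have img: "f ` E = bip_edges d V E i"
  proof
    show "f ` E \<subseteq> bip_edges d V E i"
    proof
      fix p assume "p \<in> f ` E"
      then obtain e where e: "e \<in> E" "p = f e" by auto
      have "e \<in> PiE I V" using e EP by auto
      hence "e i \<in> V i" using iI by auto
      moreover have "restrict e (I - {i}) \<in> walls d E i" using e unfolding walls_def I_def by auto
      moreover have "(restrict e (I - {i}))(i := e i) \<in> E"
        using restr_upd[OF \<open>e \<in> PiE I V\<close> iI] e by simp
      ultimately show "p \<in> bip_edges d V E i" unfolding bip_edges_def e f_def by auto
    qed
  next
    show "bip_edges d V E i \<subseteq> f ` E"
    proof
      fix p assume p: "p \<in> bip_edges d V E i"
      then obtain v Y where pv: "p = (v, Y)" "Y \<in> walls d E i" "Y(i := v) \<in> E"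
        unfolding bip_edges_def by auto
      then obtain e0 where "e0 \<in> E" "Y = restrict e0 (I - {i})"
        unfolding walls_def I_def by auto
      hence "restrict (Y(i := v)) (I - {i}) = Y" by (auto simp: restrict_def)
      hence "f (Y(i := v)) = p" using pv by (simp add: f_def)
      thus "p \<in> f ` E" using pv by force
    qed
  qed
  have bij: "bij_betw f E (bip_edges d V E i)" using inj img by (simp add: bij_betw_def)
  have cardF: "card (bip_edges d V E i) = card E" using bij_betw_same_card[OF bij] by simp
  have pre: "E \<inter> f -` (W i \<times> T) = E \<inter> PiE I W"
  proof (intro set_eqI iffI)
    fix e assume "e \<in> E \<inter> f -` (W i \<times> T)"
    hence e: "e \<in> E" "e i \<in> W i" "restrict e (I - {i}) \<in> PiE (I - {i}) W"
      by (auto simp: f_def T_def)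
    have ext: "e \<in> extensional I" using e EP by (auto simp: PiE_def)
    have "e \<in> PiE I W"
    proof (rule PiE_I)
      fix x assume "x \<in> I" thus "e x \<in> W x"
        using e by (cases "x = i") (auto simp: PiE_def Pi_def)
    next
      fix x assume "x \<notin> I" thus "e x = undefined" using ext by (auto simp: extensional_def)
    qed
    thus "e \<in> E \<inter> PiE I W" using e by simp
  next
    fix e assume e: "e \<in> E \<inter> PiE I W"
    have "restrict e (I - {i}) \<in> walls d E i" using e unfolding walls_def I_def by auto
    moreover have "e i \<in> W i" using e iI by auto
    moreover have "restrict e (I - {i}) \<in> PiE (I - {i}) W" using e by auto
    ultimately show "e \<in> E \<inter> f -` (W i \<times> T)" using e by (auto simp: f_def T_def)
  qed
  have "bip_edges d V E i \<inter> W i \<times> T = f ` (E \<inter> f -` (W i \<times> T))" unfolding img[symmetric] by blast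
  hence cardA: "card (bip_edges d V E i \<inter> W i \<times> T) = card (E \<inter> PiE I W)"
    using pre card_image[OF inj_on_subset[OF inj, of "E \<inter> f -` (W i \<times> T)"]] by auto
  define N where "N = real (card E)"
  define A where "A = real (card (E \<inter> PiE I W))"
  define a where "a = real (card (W i)) / real (card (V i))"
  define t where "t = real (card T) / real (card (walls d E i))"
  define q where "q = (\<Prod>j\<in>I - {i}. real (card (W j)) / real (card (V j)))"
  have prod: "(\<Prod>j\<in>I. real (card (W j)) / real (card (V j))) = a * q"
    unfolding a_def q_def using iI prod.remove[of I i "\<lambda>j. real (card (W j)) / real (card (V j))"] by (simp add: I_def)
  have a0: "a \<ge> 0" unfolding a_def by simp
  have h1: "hdisc I V E W = \<bar>A / N - a * q\<bar>" unfolding hdisc_def A_def N_def prod ..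
  have h2: "bdisc (V i) (walls d E i) (bip_edges d V E i) (W i) T = \<bar>A / N - a * t\<bar>"
    unfolding bdisc_def cardF cardA A_def N_def a_def t_def ..
  have h3: "hdisc (I - {i}) V (walls d E i) W = \<bar>t - q\<bar>"
    unfolding hdisc_def t_def q_def T_def ..
  have "\<bar>A / N - a * q\<bar> \<le> \<bar>A / N - a * t\<bar> + a * \<bar>t - q\<bar>"
  proof -
    have "\<bar>A / N - a * q\<bar> \<le> \<bar>A / N - a * t\<bar> + \<bar>a * t - a * q\<bar>" by linarith
    also have "\<bar>a * t - a * q\<bar> = a * \<bar>t - q\<bar>"
      using a0 by (simp add: abs_mult right_diff_distrib[symmetric])
    finally show ?thesis .
  qed
  thus ?thesis using h1 h2 h3 unfolding I_def T_def a_def by simp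
qed

end
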